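(* Let $N\ge1$, $H=(H_1,\dots,H_N)\in]0,1[^N$, $a\in\mathbb{R}^N\setminus\{(0,\dots,0)\}$ and let $S^H$ be the mixed sub-fractional Brownian motion with parameters $N,a,H$. Then for every $t_0\in[0,\infty)$, with probability one, $$\lim_{\epsilon\to0^+}\ \sup_{t\in[t_0-\epsilon,t_0+\epsilon]\cap[0,\infty),\ t\neq t_0}\left|\frac{S^H(t)-S^H(t_0)}{t-t_0}\right|=+\infty.$$
   Context: Let $(\Omega,\mathcal F,\mathbb P)$ be a probability space. For $K\in]0,1[$, a fractional Brownian motion on $\mathbb{R}$ with Hurst index $K$ is a continuous centered Gaussian process $\{B^K(t),t\in\mathbb{R}\}$ with $\mathrm{Cov}(B^K(t),B^K(s))=\frac12(|t|^{2K}+|s|^{2K}-|t-s|^{2K})$. The sub-fractional Brownian motion (sfBm) of index $K$ is $\xi^K_t=(B^K_t+B^K_{-t})/\sqrt2$, $t\ge0$; it is a continuous centered Gaussian process with $\mathrm{Cov}(\xi^K_t,\xi^K_s)=s^{2K}+t^{2K}-\frac12\big((s+t)^{2K}+|t-s|^{2K}\big)$. For $N\ge1$, $H\in]0,1[^N$, $a\in\mathbb{R}^N\setminus\{0\}$, the mixed sub-fractional Brownian motion (msfBm) is $S^H(t)=\sum_{i=1}^N a_i\xi^{H_i}(t)$, $t\ge0$, where $\xi^{H_1},\dots,\xi^{H_N}$ are independent sfBms with indices $H_1,\dots,H_N$. *)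

theory Defs
  imports "HOL-Probability.Probability"
begin

definition gaussian_rv :: "'a measure \<Rightarrow> ('a \<Rightarrow> real) \<Rightarrow> bool" where
  "gaussian_rv M X \<longleftrightarrow> X \<in> borel_measurable M \<and>
     ((\<exists>c. AE \<omega> in M. X \<omega> = c) \<or>
      (\<exists>\<mu> \<sigma>. \<sigma> > 0 \<and> distributed M lborel X (normal_density \<mu> \<sigma>)))"

definition gaussian_process :: "'a measure \<Rightarrow> real set \<Rightarrow> (real \<Rightarrow> 'a \<Rightarrow> real) \<Rightarrow> bool" where
  "gaussian_process M T X \<longleftrightarrow>
     (\<forall>F c. finite F \<longrightarrow> F \<subseteq> T \<longrightarrow> gaussian_rv M (\<lambda>\<omega>. \<Sum>t\<in>F. c t * X t \<omega>))"

definition sfbm_cov :: "real \<Rightarrow> real \<Rightarrow> real \<Rightarrow> real" where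
  "sfbm_cov K s t = s powr (2*K) + t powr (2*K)
      - (1/2) * ((s + t) powr (2*K) + \<bar>t - s\<bar> powr (2*K))"

definition is_sfbm :: "'a measure \<Rightarrow> real \<Rightarrow> (real \<Rightarrow> 'a \<Rightarrow> real) \<Rightarrow> bool" where
  "is_sfbm M K \<xi> \<longleftrightarrow>
     (\<forall>t\<in>{0..}. \<xi> t \<in> borel_measurable M) \<and>
     (\<forall>\<omega>\<in>space M. continuous_on {0..} (\<lambda>t. \<xi> t \<omega>)) \<and>
     gaussian_process M {0..} \<xi> \<and>
     (\<forall>t\<in>{0..}. integrable M (\<xi> t) \<and> (\<integral>\<omega>. \<xi> t \<omega> \<partial>M) = 0) \<and>
     (\<forall>s\<in>{0..}. \<forall>t\<in>{0..}. (\<integral>\<omega>. \<xi> t \<omega> * \<xi> s \<omega> \<partial>M) = sfbm_cov K s t)"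

definition msfbm :: "nat \<Rightarrow> (nat \<Rightarrow> real) \<Rightarrow> (nat \<Rightarrow> real \<Rightarrow> 'a \<Rightarrow> real) \<Rightarrow> real \<Rightarrow> 'a \<Rightarrow> real" where
  "msfbm N a \<xi> t \<omega> = (\<Sum>i<N. a i * \<xi> i t \<omega>)"

end

theory Submission
  imports Defs
begin

lemma mvt_powr:
  fixes a b r :: real
  assumes "0 < a" "a < b"
  shows "\<exists>z. a < z \<and> z < b \<and> b powr r - a powr r = (b - a) * (r * z powr (r - 1))"
proof -
  have "\<And>x. a \<le> x \<Longrightarrow> x \<le> b \<Longrightarrow> ((\<lambda>z. z powr r) has_real_derivative r * x powr (r - 1)) (at x)"
    using assms by (intro has_real_derivative_powr) auto
  from MVT2[OF assms(2) this] show ?thesis by blast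
qed

lemma phi_bound:
  fixes u h p :: real
  assumes u: "0 < u" and h: "0 < h" and p: "0 < p" "p < 2"
  shows "(u + 2 * h) powr p / 2 + u powr p / 2 - (u + h) powr p \<le> p * \<bar>p - 1\<bar> * u powr (p - 2) * h^2"
proof -
  have l1: "u + h < u + 2 * h" "0 < u + h" using u h by auto
  obtain z1 where z1: "u + h < z1" "z1 < u + 2 * h"
    "(u + 2 * h) powr p - (u+h) powr p = ((u + 2 * h) - (u+h)) * (p * z1 powr (p - 1))"
    using mvt_powr[OF l1(2) l1(1), of p] by blast
  have l2: "u < u + h" using h by auto
  obtain z2 where z2: "u < z2" "z2 < u + h"
    "(u+h) powr p - u powr p = ((u+h) - u) * (p * z2 powr (p - 1))"
    using mvt_powr[OF u l2, of p] by blast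
  have l3: "0 < z2" "z2 < z1" using z1 z2 u by linarith+
  obtain z3 where z3: "z2 < z3" "z3 < z1"
    "z1 powr (p-1) - z2 powr (p-1) = (z1 - z2) * ((p-1) * z3 powr (p - 1 - 1))"
    using mvt_powr[OF l3, of "p-1"] by blast
  define A where "A = z1 powr (p-1)"
  define B where "B = z2 powr (p-1)"
  have e1: "(u + 2 * h) powr p - (u+h) powr p = h * p * A" using z1(3) by (simp add: A_def)
  have e2: "(u+h) powr p - u powr p = h * p * B" using z2(3) by (simp add: B_def)
  have e3: "h / 2 * p * (A - B) = (h * p * A) / 2 - (h * p * B) / 2" by argo
  have lhs: "(u + 2 * h) powr p / 2 + u powr p / 2 - (u + h) powr p
      = h / 2 * p * (A - B)"
    unfolding e3 using e1 e2 by linarith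
  have z3': "A - B = (z1 - z2) * ((p-1) * z3 powr (p - 2))"
    using z3(3) unfolding A_def B_def by (simp add: diff_diff_eq[symmetric])
  have key: "A - B \<le> 2 * h * (\<bar>p - 1\<bar> * u powr (p - 2))"
  proof (cases "p - 1 \<le> 0")
    case True
    have "0 \<le> z1 - z2" using z3 by linarith
    moreover have "(p-1) * z3 powr (p - 2) \<le> 0" using True by (simp add: mult_nonpos_nonneg)
    ultimately have "(z1 - z2) * ((p-1) * z3 powr (p - 2)) \<le> 0"
      by (simp add: mult_nonneg_nonpos)
    moreover have "0 \<le> 2 * h * (\<bar>p - 1\<bar> * u powr (p - 2))" using h by simp
    ultimately show ?thesis using z3' by linarith
  next
    case False
    have "z3 powr (p - 2) \<le> u powr (p - 2)"
      using z2 z3 u p by (intro powr_mono2') auto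
    hence f1: "(p-1) * z3 powr (p - 2) \<le> \<bar>p-1\<bar> * u powr (p - 2)" using False
      by (simp add: mult_left_mono)
    have f2: "z1 - z2 \<le> 2 * h" using z1 z2 by linarith
    have f3: "0 \<le> (p-1) * z3 powr (p - 2)" using False by simp
    have f4: "0 \<le> 2 * h" using h by simp
    have "(z1 - z2) * ((p-1) * z3 powr (p - 2)) \<le> 2 * h * (\<bar>p - 1\<bar> * u powr (p - 2))"
      using mult_mono[OF f2 f1 f4 f3] .
    thus ?thesis using z3' by linarith
  qed
  have "h / 2 * p * (A - B) \<le> h / 2 * p * (2 * h * (\<bar>p - 1\<bar> * u powr (p - 2)))"
    by (rule mult_left_mono[OF key]) (use h p in auto)
  also have "\<dots> = p * \<bar>p - 1\<bar> * u powr (p - 2) * h^2" unfolding power2_eq_square by (simp add: ac_simps)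
  finally show ?thesis using lhs by linarith
qed

lemma growth:
  fixes c C p B :: real
  assumes c: "c > 0" and C: "C \<ge> 0" and p: "p < 2"
  shows "\<exists>\<eta>>0. \<forall>h. 0 < h \<and> h < \<eta> \<longrightarrow> c * h powr p - C * h^2 > B * h^2"
proof -
  define A where "A = (\<bar>B\<bar> + C) / c + 1"
  have "(\<bar>B\<bar> + C) / c \<ge> 0" using c C by (intro divide_nonneg_pos) auto
  hence A: "A > 0" by (simp add: A_def)
  have cA: "c * A = \<bar>B\<bar> + C + c" using c unfolding A_def by (simp add: field_simps)
  define \<eta> where "\<eta> = A powr (1/(p-2))"
  have eta: "\<eta> > 0" using A by (simp add: \<eta>_def)
  have q: "1/(p-2) * (p-2) = 1" using p by simp
  have etaA: "\<eta> powr (p-2) = A" unfolding \<eta>_def powr_powr q using A by simp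
  show ?thesis
  proof (intro exI[of _ \<eta>] conjI allI impI eta)
    fix h :: real assume hh: "0 < h \<and> h < \<eta>"
    have "\<eta> powr (p-2) < h powr (p-2)" using hh p by (intro powr_less_mono2_neg) auto
    hence hA: "A < h powr (p-2)" using etaA by simp
    have h2: "h powr 2 = h^2" using hh by (simp add: powr_numeral)
    have hp: "h powr p = h powr (p-2) * h^2"
    proof -
      have "h powr p = h powr ((p-2) + 2)" by simp
      also have "\<dots> = h powr (p-2) * h powr 2" by (rule powr_add)
      finally show ?thesis using h2 by simp
    qed
    have Y: "h^2 > 0" using hh by simp
    have "c * A < c * h powr (p-2)" using c hA by simp
    hence "(c * A) * h^2 < (c * h powr (p-2)) * h^2"
      using Y by (rule mult_strict_right_mono)
    hence i1: "(\<bar>B\<bar> + C + c) * h^2 < c * h powr p" unfolding cA hp by (simp add: mult.assoc)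
    have i2: "B * h^2 \<le> \<bar>B\<bar> * h^2" using Y by (intro mult_right_mono) auto
    have i3: "(\<bar>B\<bar> + C + c) * h^2 = \<bar>B\<bar> * h^2 + C * h^2 + c * h^2" by (simp add: distrib_right)
    have i4: "c * h^2 > 0" using c Y by simp
    show "c * h powr p - C * h^2 > B * h^2" using i1 i2 i3 i4 by linarith
  qed
qed

lemma var_growth:
  fixes K s B :: real
  assumes K: "0 < K" "K < 1" and s: "s \<ge> 0"
  shows "\<exists>\<eta>>0. \<forall>h. 0 < h \<and> h < \<eta> \<longrightarrow>
    sfbm_cov K (s+h) (s+h) - 2 * sfbm_cov K s (s+h) + sfbm_cov K s s > B * h^2"
proof -
  define p where "p = 2*K"
  have p: "0 < p" "p < 2" using K by (auto simp: p_def)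
  have V: "sfbm_cov K (s+h) (s+h) - 2 * sfbm_cov K s (s+h) + sfbm_cov K s s
     = h powr p - ((2 * s + 2 * h) powr p / 2 + (2 * s) powr p / 2 - (2 * s + h) powr p)" if "h > 0" for h
  proof -
    have a: "(s+h)+(s+h) = 2 * s + 2 * h" "\<bar>(s+h)-(s+h)\<bar> = 0" "s + (s+h) = 2 * s + h"
      "\<bar>(s+h)-s\<bar> = h" "s+s = 2 * s" "\<bar>s-s\<bar> = 0" using that by auto
    have z: "(0::real) powr p = 0" by simp
    show ?thesis unfolding sfbm_cov_def p_def[symmetric] a z by argo
  qed
  obtain c C where cC: "c > 0" "C \<ge> 0"
    and lb: "\<And>h. h > 0 \<Longrightarrow> c * h powr p - C * h^2 \<le>
       h powr p - ((2 * s + 2 * h) powr p / 2 + (2 * s) powr p / 2 - (2 * s + h) powr p)"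
  proof (cases "s = 0")
    case True
    have "2 powr p < 2 powr 2" using p by (intro powr_less_mono) auto
    hence c: "2 - 2 powr p / 2 > 0" by simp
    show ?thesis
    proof (rule that[OF c order.refl])
      fix h :: real assume "h > 0"
      show "(2 - 2 powr p / 2) * h powr p - 0 * h^2 \<le>
        h powr p - ((2 * s + 2 * h) powr p / 2 + (2 * s) powr p / 2 - (2 * s + h) powr p)"
      proof -
        have b: "(2 * s + 2 * h) powr p = 2 powr p * h powr p" "(2 * s) powr p = 0"
          "(2 * s + h) powr p = h powr p" using True \<open>h > 0\<close> by (simp_all add: powr_mult)
        have d: "(2 - 2 powr p / 2) * h powr p = 2 * h powr p - (2 powr p * h powr p) / 2"
          by (simp add: left_diff_distrib)
        show ?thesis unfolding b d by simp
      qed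
    qed
  next
    case False
    hence s0: "2 * s > 0" using s by simp
    show ?thesis
    proof (rule that[of 1 "p * \<bar>p - 1\<bar> * (2 * s) powr (p - 2)"])
      fix h :: real assume "h > 0"
      from phi_bound[OF s0 this p] show "1 * h powr p - p * \<bar>p - 1\<bar> * (2 * s) powr (p - 2) * h^2 \<le>
        h powr p - ((2 * s + 2 * h) powr p / 2 + (2 * s) powr p / 2 - (2 * s + h) powr p)"
        by simp
    qed (use p in \<open>simp_all\<close>)
  qed
  obtain \<eta> where eta: "\<eta> > 0" "\<And>h. 0 < h \<and> h < \<eta> \<Longrightarrow> c * h powr p - C * h^2 > B * h^2"
    using growth[OF cC p(2), of B] by blast
  show ?thesis
  proof (intro exI[of _ \<eta>] conjI allI impI eta(1))
    fix h :: real assume hh: "0 < h \<and> h < \<eta>"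
    have "B * h^2 < c * h powr p - C * h^2" using eta(2)[OF hh] .
    also have "\<dots> \<le> h powr p - ((2 * s + 2 * h) powr p / 2 + (2 * s) powr p / 2 - (2 * s + h) powr p)"
      using lb hh by blast
    also have "\<dots> = sfbm_cov K (s+h) (s+h) - 2 * sfbm_cov K s (s+h) + sfbm_cov K s s"
      using V hh by simp
    finally show "sfbm_cov K (s+h) (s+h) - 2 * sfbm_cov K s (s+h) + sfbm_cov K s s > B * h^2" .
  qed
qed

lemma normal_sq_integrable:
  assumes "0 < \<sigma>"
  shows "integrable lborel (\<lambda>x. normal_density \<mu> \<sigma> x * x^2)"
proof -
  have i1: "integrable lborel (\<lambda>x. normal_density \<mu> \<sigma> x * (x - \<mu>)^2)"
    by (rule integrable_normal_moment[OF assms])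
  have i2: "integrable lborel (\<lambda>x. 2 * \<mu> * (normal_density \<mu> \<sigma> x * x))"
    using integrable_normal_moment_nz_1[OF assms] by (rule integrable_mult_right)
  have i3: "integrable lborel (\<lambda>x. \<mu>^2 * normal_density \<mu> \<sigma> x)"
    by (intro integrable_mult_right integrable_normal_density[OF assms])
  have I: "integrable lborel (\<lambda>x. normal_density \<mu> \<sigma> x * (x - \<mu>)^2 + 2 * \<mu> * (normal_density \<mu> \<sigma> x * x)
      - \<mu>^2 * normal_density \<mu> \<sigma> x)"
    using i1 i2 i3 by (intro Bochner_Integration.integrable_add Bochner_Integration.integrable_diff)
  have eq: "(\<lambda>x. normal_density \<mu> \<sigma> x * (x - \<mu>)^2 + 2 * \<mu> * (normal_density \<mu> \<sigma> x * x)
      - \<mu>^2 * normal_density \<mu> \<sigma> x) = (\<lambda>x. normal_density \<mu> \<sigma> x * x^2)"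
  proof (rule ext)
    fix x
    have "\<And>d::real. d * (x - \<mu>)^2 + 2 * \<mu> * (d * x) - \<mu>^2 * d = d * x^2" by algebra
    thus "normal_density \<mu> \<sigma> x * (x - \<mu>)^2 + 2 * \<mu> * (normal_density \<mu> \<sigma> x * x)
      - \<mu>^2 * normal_density \<mu> \<sigma> x = normal_density \<mu> \<sigma> x * x^2" .
  qed
  show ?thesis using I unfolding eq .
qed

lemma gauss_sq_int:
  assumes P: "prob_space M" and G: "gaussian_rv M X"
  shows "integrable M (\<lambda>\<omega>. (X \<omega>)^2)"
proof -
  interpret prob_space M by (rule P)
  have X: "X \<in> borel_measurable M" using G by (simp add: gaussian_rv_def)
  from G consider c where "AE \<omega> in M. X \<omega> = c"
    | \<mu> \<sigma> where "\<sigma> > 0" "distributed M lborel X (normal_density \<mu> \<sigma>)"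
    unfolding gaussian_rv_def by blast
  then show ?thesis
  proof cases
    case (1 c)
    have i: "integrable M (\<lambda>\<omega>. c^2)" by simp
    have ae: "AE \<omega> in M. c^2 = (X \<omega>)^2" using 1 by eventually_elim simp
    have m: "(\<lambda>\<omega>. (X \<omega>)^2) \<in> borel_measurable M" using X by measurable
    show ?thesis by (rule integrable_cong_AE_imp[OF i m ae])
  next
    case (2 \<mu> \<sigma>)
    have "integrable lborel (\<lambda>x. normal_density \<mu> \<sigma> x * x^2)"
      using 2 by (intro normal_sq_integrable)
    moreover have "integrable lborel (\<lambda>x. normal_density \<mu> \<sigma> x * x^2) \<longleftrightarrow> integrable M (\<lambda>\<omega>. (X \<omega>)^2)"
    proof (rule distributed_integrable[OF 2(2)])
      show "(\<lambda>x::real. x^2) \<in> borel_measurable lborel" by measurable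
    qed simp
    ultimately show ?thesis by blast
  qed
qed

lemma gauss_normal:
  assumes P: "prob_space M" and G: "gaussian_rv M X"
    and E: "prob_space.expectation M X = 0"
    and V: "prob_space.expectation M (\<lambda>\<omega>. (X \<omega>)^2) = v" and v: "v > 0"
  shows "distributed M lborel X (normal_density 0 (sqrt v))"
proof -
  interpret prob_space M by (rule P)
  have X: "X \<in> borel_measurable M" using G by (simp add: gaussian_rv_def)
  from G consider c where "AE \<omega> in M. X \<omega> = c"
    | \<mu> \<sigma> where "\<sigma> > 0" "distributed M lborel X (normal_density \<mu> \<sigma>)"
    unfolding gaussian_rv_def by blast
  then show ?thesis
  proof cases
    case (1 c)
    have "expectation X = expectation (\<lambda>_. c)"
      by (rule integral_cong_AE[OF X _ 1]) simp
    hence c: "c = 0" using E by (simp add: prob_space)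
    have X2: "(\<lambda>\<omega>. (X \<omega>)^2) \<in> borel_measurable M" using X by measurable
    have "AE \<omega> in M. (X \<omega>)^2 = 0" using 1 by eventually_elim (simp add: c)
    hence "expectation (\<lambda>\<omega>. (X \<omega>)^2) = expectation (\<lambda>_. 0::real)"
      by (rule integral_cong_AE[OF X2, rotated]) simp
    hence "v = 0" using V by simp
    hence False using v by linarith
    thus ?thesis ..
  next
    case (2 \<mu> \<sigma>)
    have mu: "\<mu> = 0" using normal_distributed_expectation[OF 2] E by simp
    have "variance X = \<sigma>^2" using normal_distributed_variance[OF 2] .
    hence s2: "\<sigma>^2 = v" using E V by simp
    have sv: "\<sigma> = sqrt v" unfolding s2[symmetric] using 2(1) by simp
    show ?thesis using 2(2) unfolding mu sv .
  qed
qed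

lemma abs_prod_le: "\<bar>x * y\<bar> \<le> x^2 + (y::real)^2"
proof -
  have "0 \<le> (\<bar>x\<bar> - \<bar>y\<bar>)^2" by simp
  hence "2 * (\<bar>x\<bar> * \<bar>y\<bar>) \<le> \<bar>x\<bar>^2 + \<bar>y\<bar>^2" by (simp add: power2_eq_square algebra_simps)
  moreover have "0 \<le> \<bar>x\<bar> * \<bar>y\<bar>" by simp
  moreover have "\<bar>x\<bar>^2 = x^2" "\<bar>y\<bar>^2 = y^2" by simp_all
  ultimately show ?thesis unfolding abs_mult by linarith
qed

lemma gp_single:
  assumes "gaussian_process M T X" "t \<in> T"
  shows "gaussian_rv M (X t)"
proof -
  have H: "\<forall>F c. finite F \<longrightarrow> F \<subseteq> T \<longrightarrow> gaussian_rv M (\<lambda>\<omega>. \<Sum>t\<in>F. c t * X t \<omega>)"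
    using assms(1) unfolding gaussian_process_def .
  have "gaussian_rv M (\<lambda>\<omega>. \<Sum>u\<in>{t}. (\<lambda>_. 1::real) u * X u \<omega>)"
    using H[rule_format, of "{t}" "\<lambda>_. 1"] assms(2) by simp
  moreover have "(\<lambda>\<omega>. \<Sum>u\<in>{t}. (\<lambda>_. 1::real) u * X u \<omega>) = X t" by (rule ext) simp
  ultimately show ?thesis by (simp only:)
qed

lemma gp_diff:
  assumes "gaussian_process M T X" "t \<in> T" "s \<in> T" "t \<noteq> s"
  shows "gaussian_rv M (\<lambda>\<omega>. X t \<omega> - X s \<omega>)"
proof -
  define c where "c = (\<lambda>u. if u = t then 1 else (-1::real))"
  have H: "\<forall>F c. finite F \<longrightarrow> F \<subseteq> T \<longrightarrow> gaussian_rv M (\<lambda>\<omega>. \<Sum>t\<in>F. c t * X t \<omega>)"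
    using assms(1) unfolding gaussian_process_def .
  have "gaussian_rv M (\<lambda>\<omega>. \<Sum>u\<in>{t, s}. c u * X u \<omega>)"
    using H[rule_format, of "{t, s}" c] assms(2,3) by blast
  moreover have "(\<lambda>\<omega>. \<Sum>u\<in>{t, s}. c u * X u \<omega>) = (\<lambda>\<omega>. X t \<omega> - X s \<omega>)"
    using assms(4) by (intro ext) (simp add: c_def)
  ultimately show ?thesis by (simp only:)
qed

lemma incr_normal:
  assumes P: "prob_space M" and S: "is_sfbm M K \<xi>" and s: "s \<ge> 0" and h: "h > 0"
    and Vdef: "V = sfbm_cov K (s+h) (s+h) - 2 * sfbm_cov K s (s+h) + sfbm_cov K s s"
    and Vp: "V > 0"
  shows "distributed M lborel (\<lambda>\<omega>. \<xi> (s+h) \<omega> - \<xi> s \<omega>) (normal_density 0 (sqrt V))"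
proof -
  interpret prob_space M by (rule P)
  let ?t = "s + h"
  have GP: "gaussian_process M {0..} \<xi>" using S by (simp add: is_sfbm_def)
  have ts: "?t \<in> {0..}" "s \<in> {0..}" "?t \<noteq> s" using s h by auto
  have mt: "\<xi> ?t \<in> borel_measurable M" and ms: "\<xi> s \<in> borel_measurable M"
    using S ts unfolding is_sfbm_def by blast+
  have it: "integrable M (\<xi> ?t)" and is': "integrable M (\<xi> s)"
    and et: "expectation (\<xi> ?t) = 0" and es: "expectation (\<xi> s) = 0"
    using S ts unfolding is_sfbm_def by blast+
  have cov: "\<And>a b. a \<in> {0..} \<Longrightarrow> b \<in> {0..} \<Longrightarrow> expectation (\<lambda>\<omega>. \<xi> b \<omega> * \<xi> a \<omega>) = sfbm_cov K a b"
    using S unfolding is_sfbm_def by blast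
  have sqt: "integrable M (\<lambda>\<omega>. (\<xi> ?t \<omega>)^2)"
    by (rule gauss_sq_int[OF P gp_single[OF GP ts(1)]])
  have sqs: "integrable M (\<lambda>\<omega>. (\<xi> s \<omega>)^2)"
    by (rule gauss_sq_int[OF P gp_single[OF GP ts(2)]])
  have pint: "integrable M (\<lambda>\<omega>. \<xi> a \<omega> * \<xi> b \<omega>)"
    if "a \<in> {?t, s}" "b \<in> {?t, s}" for a b
  proof -
    have ia: "integrable M (\<lambda>\<omega>. (\<xi> a \<omega>)^2)" and ib: "integrable M (\<lambda>\<omega>. (\<xi> b \<omega>)^2)"
      using that sqt sqs by auto
    have ma: "\<xi> a \<in> borel_measurable M" and mb: "\<xi> b \<in> borel_measurable M"
      using that mt ms by auto
    have I: "integrable M (\<lambda>\<omega>. (\<xi> a \<omega>)^2 + (\<xi> b \<omega>)^2)"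
      using ia ib by (rule Bochner_Integration.integrable_add)
    have M2: "(\<lambda>\<omega>. \<xi> a \<omega> * \<xi> b \<omega>) \<in> borel_measurable M" using ma mb by measurable
    show ?thesis
    proof (rule Bochner_Integration.integrable_bound[OF I M2])
      show "AE \<omega> in M. norm (\<xi> a \<omega> * \<xi> b \<omega>) \<le> norm ((\<xi> a \<omega>)^2 + (\<xi> b \<omega>)^2)"
      proof (rule AE_I2)
        fix \<omega>
        have "0 \<le> (\<xi> a \<omega>)^2 + (\<xi> b \<omega>)^2" by simp
        thus "norm (\<xi> a \<omega> * \<xi> b \<omega>) \<le> norm ((\<xi> a \<omega>)^2 + (\<xi> b \<omega>)^2)"
          using abs_prod_le[of "\<xi> a \<omega>" "\<xi> b \<omega>"] unfolding real_norm_def by linarith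
      qed
    qed
  qed
  have i1: "integrable M (\<lambda>\<omega>. \<xi> ?t \<omega> * \<xi> ?t \<omega>)" by (rule pint) auto
  have i2: "integrable M (\<lambda>\<omega>. 2 * (\<xi> ?t \<omega> * \<xi> s \<omega>))"
    by (rule integrable_mult_right) (rule pint, auto)
  have i3: "integrable M (\<lambda>\<omega>. \<xi> s \<omega> * \<xi> s \<omega>)" by (rule pint) auto
  have EX: "expectation (\<lambda>\<omega>. \<xi> ?t \<omega> - \<xi> s \<omega>) = 0"
    using Bochner_Integration.integral_diff[OF it is'] et es by simp
  have sq: "(\<lambda>\<omega>. (\<xi> ?t \<omega> - \<xi> s \<omega>)^2) =
      (\<lambda>\<omega>. \<xi> ?t \<omega> * \<xi> ?t \<omega> - 2 * (\<xi> ?t \<omega> * \<xi> s \<omega>) + \<xi> s \<omega> * \<xi> s \<omega>)"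
    by (rule ext) (simp add: power2_eq_square algebra_simps)
  have "expectation (\<lambda>\<omega>. \<xi> ?t \<omega> * \<xi> ?t \<omega> - 2 * (\<xi> ?t \<omega> * \<xi> s \<omega>) + \<xi> s \<omega> * \<xi> s \<omega>)
     = expectation (\<lambda>\<omega>. \<xi> ?t \<omega> * \<xi> ?t \<omega>) - expectation (\<lambda>\<omega>. 2 * (\<xi> ?t \<omega> * \<xi> s \<omega>))
       + expectation (\<lambda>\<omega>. \<xi> s \<omega> * \<xi> s \<omega>)"
    unfolding Bochner_Integration.integral_add[OF Bochner_Integration.integrable_diff[OF i1 i2] i3]
      Bochner_Integration.integral_diff[OF i1 i2] ..
  also have "expectation (\<lambda>\<omega>. 2 * (\<xi> ?t \<omega> * \<xi> s \<omega>)) = 2 * expectation (\<lambda>\<omega>. \<xi> ?t \<omega> * \<xi> s \<omega>)"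
    by (rule integral_mult_right_zero)
  also have "expectation (\<lambda>\<omega>. \<xi> ?t \<omega> * \<xi> ?t \<omega>) - 2 * expectation (\<lambda>\<omega>. \<xi> ?t \<omega> * \<xi> s \<omega>)
       + expectation (\<lambda>\<omega>. \<xi> s \<omega> * \<xi> s \<omega>) = sfbm_cov K ?t ?t - 2 * sfbm_cov K s ?t + sfbm_cov K s s"
    unfolding cov[OF ts(1) ts(1)] cov[OF ts(2) ts(1)] cov[OF ts(2) ts(2)] ..
  finally have EX2: "expectation (\<lambda>\<omega>. (\<xi> ?t \<omega> - \<xi> s \<omega>)^2) = V"
    unfolding sq Vdef .
  show ?thesis
    by (rule gauss_normal[OF P gp_diff[OF GP ts] EX EX2 Vp])
qed

lemma normal_density_le:
  assumes s: "\<sigma> > 0"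
  shows "normal_density \<mu> \<sigma> x \<le> 1 / \<sigma>"
proof -
  have e: "exp (-(x - \<mu>)\<^sup>2 / (2 * \<sigma>\<^sup>2)) \<le> 1" by simp
  have sq: "sqrt (2 * pi * \<sigma>\<^sup>2) = sqrt (2 * pi) * \<sigma>"
    using s by (simp add: real_sqrt_mult)
  have "1 \<le> sqrt (2 * pi)" using pi_gt3 by simp
  hence ge: "\<sigma> \<le> sqrt (2 * pi * \<sigma>\<^sup>2)" unfolding sq using s by simp
  have pos: "0 < sqrt (2 * pi * \<sigma>\<^sup>2)" using s by simp
  have "normal_density \<mu> \<sigma> x = 1 / sqrt (2 * pi * \<sigma>\<^sup>2) * exp (-(x - \<mu>)\<^sup>2 / (2 * \<sigma>\<^sup>2))"
    by (simp add: normal_density_def)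
  also have "\<dots> \<le> 1 / sqrt (2 * pi * \<sigma>\<^sup>2) * 1"
    using e pos by (intro mult_left_mono) auto
  also have "\<dots> \<le> 1 / \<sigma>" using ge s pos by (simp add: frac_le)
  finally show ?thesis .
qed

lemma anti_conc:
  assumes P: "prob_space M" and I: "prob_space.indep_var M borel X borel R"
    and D: "distributed M lborel X (normal_density \<mu> \<sigma>)" and s: "\<sigma> > 0" and d: "d \<ge> 0"
  shows "measure M {\<omega> \<in> space M. \<bar>X \<omega> + R \<omega>\<bar> \<le> d} \<le> 2 * d / \<sigma>"
proof -
  interpret prob_space M by (rule P)
  have rvX: "X \<in> borel_measurable M" and rvR: "R \<in> borel_measurable M"
    and eq: "distr M borel X \<Otimes>\<^sub>M distr M borel R = distr M (borel \<Otimes>\<^sub>M borel) (\<lambda>x. (X x, R x))"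
    using I unfolding indep_var_distribution_eq by auto
  define PX where "PX = distr M borel X"
  define PR where "PR = distr M borel R"
  interpret PX: prob_space PX unfolding PX_def by (rule prob_space_distr[OF rvX])
  interpret PR: prob_space PR unfolding PR_def by (rule prob_space_distr[OF rvR])
  interpret PXR: pair_prob_space PX PR ..
  define A where "A = {p \<in> space (borel \<Otimes>\<^sub>M borel). \<bar>fst p + snd p\<bar> \<le> (d::real)}"
  have A: "A \<in> sets (borel \<Otimes>\<^sub>M borel)" unfolding A_def by measurable
  have pm: "(\<lambda>x. (X x, R x)) \<in> measurable M (borel \<Otimes>\<^sub>M borel)" using rvX rvR by measurable
  have Sset: "{\<omega> \<in> space M. \<bar>X \<omega> + R \<omega>\<bar> \<le> d} = (\<lambda>x. (X x, R x)) -` A \<inter> space M"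
    unfolding A_def by (auto simp: space_pair_measure)
  have PXeq: "PX = density lborel (normal_density \<mu> \<sigma>)"
  proof -
    have "PX = distr M lborel X" unfolding PX_def by (rule distr_cong) auto
    also have "\<dots> = density lborel (normal_density \<mu> \<sigma>)"
      using distributed_distr_eq_density[OF D] .
    finally show ?thesis .
  qed
  have slice: "emeasure PX ((\<lambda>x. (x, r)) -` A) \<le> ennreal (2 * d / \<sigma>)" for r
  proof -
    have sl: "(\<lambda>x. (x, r)) -` A = {-r-d..d-r}"
      unfolding A_def by (auto simp: space_pair_measure)
    have "emeasure PX {-r-d..d-r} = (\<integral>\<^sup>+x. ennreal (normal_density \<mu> \<sigma> x) * indicator {-r-d..d-r} x \<partial>lborel)"
      unfolding PXeq by (rule emeasure_density) auto
    also have "\<dots> \<le> (\<integral>\<^sup>+x. ennreal (1/\<sigma>) * indicator {-r-d..d-r} x \<partial>lborel)"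
      by (intro nn_integral_mono mult_right_mono) (auto intro!: ennreal_leI normal_density_le[OF s])
    also have "\<dots> = ennreal (1/\<sigma>) * emeasure lborel {-r-d..d-r}"
      by (rule nn_integral_cmult_indicator) simp
    also have "\<dots> = ennreal (2 * d / \<sigma>)"
      using d s by (simp add: ennreal_mult[symmetric])
    finally show ?thesis unfolding sl .
  qed
  have "emeasure M {\<omega> \<in> space M. \<bar>X \<omega> + R \<omega>\<bar> \<le> d} = emeasure (distr M (borel \<Otimes>\<^sub>M borel) (\<lambda>x. (X x, R x))) A"
    unfolding Sset by (rule emeasure_distr[OF pm A, symmetric])
  also have "\<dots> = emeasure (PX \<Otimes>\<^sub>M PR) A" unfolding PX_def PR_def eq ..
  also have "\<dots> = (\<integral>\<^sup>+r. emeasure PX ((\<lambda>x. (x, r)) -` A) \<partial>PR)"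
  proof (rule PXR.emeasure_pair_measure_alt2)
    show "A \<in> sets (PX \<Otimes>\<^sub>M PR)" using A unfolding PX_def PR_def by simp
  qed
  also have "\<dots> \<le> (\<integral>\<^sup>+r. ennreal (2 * d / \<sigma>) \<partial>PR)"
    by (intro nn_integral_mono slice)
  also have "\<dots> = ennreal (2 * d / \<sigma>)" by (simp add: PR.emeasure_space_1)
  finally have "ennreal (measure M {\<omega> \<in> space M. \<bar>X \<omega> + R \<omega>\<bar> \<le> d}) \<le> ennreal (2 * d / \<sigma>)"
    by (simp add: emeasure_eq_measure)
  thus ?thesis using d s by simp
qed

lemma indep_incr:
  fixes a :: "nat \<Rightarrow> real" and \<xi> :: "nat \<Rightarrow> real \<Rightarrow> 'a \<Rightarrow> real"
  assumes P: "prob_space M"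
    and Ind: "prob_space.indep_vars M (\<lambda>_. PiM {0..} (\<lambda>_. borel))
           (\<lambda>i \<omega>. restrict (\<lambda>t. \<xi> i t \<omega>) {0..}) {..<N}"
    and j: "j < N" and t: "t \<ge> 0" and t0: "t0 \<ge> (0::real)"
  shows "prob_space.indep_var M borel (\<lambda>\<omega>. a j * (\<xi> j t \<omega> - \<xi> j t0 \<omega>)) borel
           (\<lambda>\<omega>. \<Sum>i\<in>{..<N}-{j}. a i * (\<xi> i t \<omega> - \<xi> i t0 \<omega>))"
proof -
  interpret prob_space M by (rule P)
  define G where "G i f = a i * (f t - f t0)" for i and f :: "real \<Rightarrow> real"
  have m1: "(\<lambda>f. f t) \<in> borel_measurable (PiM {0..} (\<lambda>_. borel :: real measure))"
    by (rule measurable_component_singleton) (use t in simp)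
  have m2: "(\<lambda>f. f t0) \<in> borel_measurable (PiM {0..} (\<lambda>_. borel :: real measure))"
    by (rule measurable_component_singleton) (use t0 in simp)
  have mG: "G i \<in> borel_measurable (PiM {0..} (\<lambda>_. borel))" for i
    unfolding G_def using m1 m2 by measurable
  have "indep_vars (\<lambda>_. borel) (\<lambda>i \<omega>. G i (restrict (\<lambda>t. \<xi> i t \<omega>) {0..})) {..<N}"
    by (rule indep_vars_compose2[OF Ind mG])
  moreover have "(\<lambda>i \<omega>. G i (restrict (\<lambda>t. \<xi> i t \<omega>) {0..})) = (\<lambda>i \<omega>. a i * (\<xi> i t \<omega> - \<xi> i t0 \<omega>))"
    using t t0 by (intro ext) (simp add: G_def)
  ultimately have IV: "indep_vars (\<lambda>_. borel) (\<lambda>i \<omega>. a i * (\<xi> i t \<omega> - \<xi> i t0 \<omega>)) (insert j ({..<N}-{j}))"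
    using j by (simp add: insert_absorb)
  show ?thesis
    using indep_vars_sum[OF _ _ IV] by simp
qed

theorem lemma13:
  fixes M :: "'a measure" and N :: nat and H a :: "nat \<Rightarrow> real"
    and \<xi> :: "nat \<Rightarrow> real \<Rightarrow> 'a \<Rightarrow> real" and t0 :: real
  assumes "prob_space M"
    and "N \<ge> 1"
    and "\<forall>i<N. 0 < H i \<and> H i < 1"
    and "\<exists>i<N. a i \<noteq> 0"
    and "\<forall>i<N. is_sfbm M (H i) (\<xi> i)"
    and "prob_space.indep_vars M (\<lambda>_. PiM {0..} (\<lambda>_. borel))
           (\<lambda>i \<omega>. restrict (\<lambda>t. \<xi> i t \<omega>) {0..}) {..<N}"
    and "t0 \<ge> 0"
  shows "AE \<omega> in M.
           ((\<lambda>\<epsilon>. SUP t\<in>({t0 - \<epsilon>..t0 + \<epsilon>} \<inter> {0..}) - {t0}.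
                 ereal \<bar>(msfbm N a \<xi> t \<omega> - msfbm N a \<xi> t0 \<omega>) / (t - t0)\<bar>)
            \<longlongrightarrow> \<infinity>) (at_right 0)"
proof -
  note P = assms(1) and HH = assms(3) and SF = assms(5) and Ind = assms(6) and t0 = assms(7)
  interpret prob_space M by (rule P)
  obtain j where j: "j < N" "a j \<noteq> 0" using assms(4) by blast
  have Hj: "0 < H j" "H j < 1" using HH j by auto
  have SFj: "is_sfbm M (H j) (\<xi> j)" using SF j by auto
  have mxi: "\<xi> i t \<in> borel_measurable M" if "i < N" "t \<ge> 0" for i t
    using SF that unfolding is_sfbm_def by auto
  define Dl where "Dl h \<omega> = (\<Sum>i<N. a i * (\<xi> i (t0+h) \<omega> - \<xi> i t0 \<omega>))" for h \<omega>
  have Dl_eq: "msfbm N a \<xi> (t0+h) \<omega> - msfbm N a \<xi> t0 \<omega> = Dl h \<omega>" for h \<omega>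
    unfolding msfbm_def Dl_def by (simp add: sum_subtractf[symmetric] right_diff_distrib)
  have mD: "Dl h \<in> borel_measurable M" if "h \<ge> 0" for h
  proof -
    have "(\<lambda>\<omega>. \<Sum>i<N. a i * (\<xi> i (t0+h) \<omega> - \<xi> i t0 \<omega>)) \<in> borel_measurable M"
    proof (rule borel_measurable_sum)
      fix i assume "i \<in> {..<N}"
      hence m1: "\<xi> i (t0+h) \<in> borel_measurable M" and m2: "\<xi> i t0 \<in> borel_measurable M"
        using mxi that t0 by auto
      show "(\<lambda>\<omega>. a i * (\<xi> i (t0+h) \<omega> - \<xi> i t0 \<omega>)) \<in> borel_measurable M"
        using m1 m2 by measurable
    qed
    thus ?thesis unfolding Dl_def[abs_def] by simp
  qed
  define hs where "hs n = 1 / (real n + 1)" for n :: nat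
  have hs_pos: "hs n > 0" for n unfolding hs_def by simp
  define A where "A m n = {\<omega> \<in> space M. \<bar>Dl (hs n) \<omega>\<bar> \<le> real m * hs n}" for m n :: nat
  have A_sets: "A m n \<in> sets M" for m n
  proof -
    have "Dl (hs n) \<in> borel_measurable M" using mD hs_pos[of n] by simp
    thus ?thesis unfolding A_def by measurable
  qed
  define B where "B m k = (\<Inter>n. A m (k + n))" for m k :: nat
  have B_sets: "B m k \<in> sets M" for m k
    unfolding B_def using A_sets by (intro sets.countable_INT) auto
  have A_bound: "measure M (A m n) \<le> 2 * real m / (\<bar>a j\<bar> * c)"
    if c: "c > 0" and V: "sfbm_cov (H j) (t0+hs n) (t0+hs n) - 2 * sfbm_cov (H j) t0 (t0+hs n)
        + sfbm_cov (H j) t0 t0 > c^2 * (hs n)^2" for m n c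
  proof -
    define h where "h = hs n"
    have h: "h > 0" using hs_pos by (simp add: h_def)
    define V where "V = sfbm_cov (H j) (t0+h) (t0+h) - 2 * sfbm_cov (H j) t0 (t0+h) + sfbm_cov (H j) t0 t0"
    have Vc: "V > c^2 * h^2" using V by (simp add: V_def h_def)
    have Vp: "V > 0" using Vc c h by (smt (verit) zero_less_power mult_pos_pos)
    have sV: "sqrt V > c * h"
    proof -
      have "sqrt (c^2 * h^2) < sqrt V" using Vc by simp
      moreover have "sqrt (c^2 * h^2) = c * h" using c h by (simp add: real_sqrt_mult)
      ultimately show ?thesis by simp
    qed
    have DX: "distributed M lborel (\<lambda>\<omega>. \<xi> j (t0+h) \<omega> - \<xi> j t0 \<omega>) (normal_density 0 (sqrt V))"
      by (rule incr_normal[OF P SFj t0 h V_def Vp])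
    have DZ: "distributed M lborel (\<lambda>\<omega>. 0 + a j * (\<xi> j (t0+h) \<omega> - \<xi> j t0 \<omega>))
        (normal_density (0 + a j * 0) (\<bar>a j\<bar> * sqrt V))"
      by (rule normal_density_affine[OF DX]) (use Vp j in auto)
    hence DZ': "distributed M lborel (\<lambda>\<omega>. a j * (\<xi> j (t0+h) \<omega> - \<xi> j t0 \<omega>))
        (normal_density 0 (\<bar>a j\<bar> * sqrt V))" by simp
    have IV: "indep_var borel (\<lambda>\<omega>. a j * (\<xi> j (t0+h) \<omega> - \<xi> j t0 \<omega>)) borel
           (\<lambda>\<omega>. \<Sum>i\<in>{..<N}-{j}. a i * (\<xi> i (t0+h) \<omega> - \<xi> i t0 \<omega>))"
      by (rule indep_incr[OF P Ind j(1)]) (use h t0 in auto)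
    have sig: "\<bar>a j\<bar> * sqrt V > 0" using j Vp by simp
    have md: "real m * h \<ge> 0" using h by simp
    have AC: "measure M {\<omega> \<in> space M. \<bar>a j * (\<xi> j (t0+h) \<omega> - \<xi> j t0 \<omega>)
        + (\<Sum>i\<in>{..<N}-{j}. a i * (\<xi> i (t0+h) \<omega> - \<xi> i t0 \<omega>))\<bar> \<le> real m * h}
        \<le> 2 * (real m * h) / (\<bar>a j\<bar> * sqrt V)"
      by (rule anti_conc[OF P IV DZ' sig md])
    have split: "Dl h \<omega> = a j * (\<xi> j (t0+h) \<omega> - \<xi> j t0 \<omega>)
        + (\<Sum>i\<in>{..<N}-{j}. a i * (\<xi> i (t0+h) \<omega> - \<xi> i t0 \<omega>))" for \<omega>
      unfolding Dl_def using j(1) by (simp add: sum.remove[of "{..<N}" j])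
    have "A m n = {\<omega> \<in> space M. \<bar>a j * (\<xi> j (t0+h) \<omega> - \<xi> j t0 \<omega>)
        + (\<Sum>i\<in>{..<N}-{j}. a i * (\<xi> i (t0+h) \<omega> - \<xi> i t0 \<omega>))\<bar> \<le> real m * h}"
      unfolding A_def h_def[symmetric] split ..
    hence "measure M (A m n) \<le> 2 * (real m * h) / (\<bar>a j\<bar> * sqrt V)" using AC by simp
    also have "\<dots> \<le> 2 * (real m * h) / (\<bar>a j\<bar> * (c * h))"
      using sV Vp j c h by (intro divide_left_mono mult_left_mono mult_pos_pos) auto
    also have "\<dots> = 2 * real m / (\<bar>a j\<bar> * c)" using h by simp
    finally show ?thesis .
  qed
  have B_null: "B m k \<in> null_sets M" for m k
  proof -
    have "measure M (B m k) \<le> 0 + e" if e: "e > 0" for e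
    proof -
      define c where "c = (2 * real m + 1) / (\<bar>a j\<bar> * e)"
      have c: "c > 0" using e j by (simp add: c_def)
      obtain \<eta> where eta: "\<eta> > 0" "\<And>h. 0 < h \<and> h < \<eta> \<Longrightarrow>
        sfbm_cov (H j) (t0+h) (t0+h) - 2 * sfbm_cov (H j) t0 (t0+h) + sfbm_cov (H j) t0 t0 > c^2 * h^2"
        using var_growth[OF Hj t0, of "c^2"] by blast
      define n where "n = k + nat \<lceil>1/\<eta>\<rceil>"
      have "1/\<eta> < real n + 1" unfolding n_def by linarith
      hence "hs n < \<eta>" unfolding hs_def using eta(1)
        by (simp add: divide_less_eq mult.commute)
      hence "sfbm_cov (H j) (t0+hs n) (t0+hs n) - 2 * sfbm_cov (H j) t0 (t0+hs n)
        + sfbm_cov (H j) t0 t0 > c^2 * (hs n)^2" using eta(2) hs_pos by blast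
      hence "measure M (A m n) \<le> 2 * real m / (\<bar>a j\<bar> * c)" by (rule A_bound[OF c])
      moreover have "B m k \<subseteq> A m n"
        unfolding B_def n_def by blast
      hence "measure M (B m k) \<le> measure M (A m n)" by (intro finite_measure_mono A_sets)
      moreover have "2 * real m / (\<bar>a j\<bar> * c) \<le> e"
      proof -
        have ac: "\<bar>a j\<bar> * c = (2 * real m + 1) / e" using j by (simp add: c_def)
        have "2 * real m / (\<bar>a j\<bar> * c) = 2 * real m * e / (2 * real m + 1)"
          unfolding ac by simp
        also have "\<dots> \<le> e" using e by (simp add: field_simps)
        finally show ?thesis .
      qed
      ultimately show ?thesis by linarith
    qed
    hence "measure M (B m k) \<le> 0" by (rule field_le_epsilon)
    hence "measure M (B m k) = 0" using measure_nonneg[of M "B m k"] by linarith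
    thus ?thesis using B_sets[of m k] by (simp add: null_sets_def emeasure_eq_measure)
  qed
  have Nnull: "(\<Union>m. \<Union>k. B m k) \<in> null_sets M"
    using B_null by (intro null_sets_UN) 
  show ?thesis
  proof (rule AE_I'[OF Nnull], safe)
    fix \<omega> assume om: "\<omega> \<in> space M"
    assume nt: "\<not> ((\<lambda>\<epsilon>. SUP t\<in>({t0 - \<epsilon>..t0 + \<epsilon>} \<inter> {0..}) - {t0}.
                 ereal \<bar>(msfbm N a \<xi> t \<omega> - msfbm N a \<xi> t0 \<omega>) / (t - t0)\<bar>)
            \<longlongrightarrow> \<infinity>) (at_right 0)"
    let ?F = "\<lambda>\<epsilon>. SUP t\<in>({t0 - \<epsilon>..t0 + \<epsilon>} \<inter> {0..}) - {t0}.
                 ereal \<bar>(msfbm N a \<xi> t \<omega> - msfbm N a \<xi> t0 \<omega>) / (t - t0)\<bar>"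
    obtain r where r: "\<not> eventually (\<lambda>x. ereal r < ?F x) (at_right 0)"
      using nt unfolding tendsto_PInfty by blast
    obtain y where y: "0 < y" "y < 1" "\<not> ereal r < ?F y"
      using r unfolding eventually_at_right_field by (meson zero_less_one)
    define m where "m = nat \<lceil>r\<rceil>"
    have rm: "r \<le> real m" unfolding m_def by linarith
    define k where "k = nat \<lceil>1/y\<rceil>"
    have "\<omega> \<in> B m k"
      unfolding B_def
    proof
      fix n
      let ?h = "hs (k + n)"
      have hpos: "?h > 0" by (rule hs_pos)
      have "1/y \<le> real (k+n) + 1" unfolding k_def by linarith
      hence hy: "?h \<le> y" unfolding hs_def using y(1) by (simp add: divide_le_eq mult.commute)
      have mem: "t0 + ?h \<in> ({t0 - y..t0 + y} \<inter> {0..}) - {t0}" using hpos hy t0 by auto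
      have "ereal \<bar>(msfbm N a \<xi> (t0 + ?h) \<omega> - msfbm N a \<xi> t0 \<omega>) / (t0 + ?h - t0)\<bar> \<le> ?F y"
        by (rule SUP_upper[OF mem])
      also have "\<dots> \<le> ereal r" using y(3) by simp
      finally have "\<bar>Dl ?h \<omega> / ?h\<bar> \<le> r" unfolding Dl_eq by simp
      hence "\<bar>Dl ?h \<omega>\<bar> / ?h \<le> real m" using rm hpos by simp
      hence "\<bar>Dl ?h \<omega>\<bar> \<le> real m * ?h" using hpos by (simp add: divide_le_eq)
      thus "\<omega> \<in> A m (k + n)" unfolding A_def using om by simp
    qed
    thus "\<omega> \<in> (\<Union>m. \<Union>k. B m k)" by blast
  qed
qed

end
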